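(* Let $\mathcal{X}_1,\mathcal{X}_2$ be non-empty sets (of arbitrary cardinality), let $\mathcal{B}_1\subseteq\mathcal{P}(\mathcal{X}_1)\setminus\{\emptyset\}$ and $\mathcal{B}_2\subseteq\mathcal{P}(\mathcal{X}_2)\setminus\{\emptyset\}$ be arbitrary sets of conditioning events, and for $i\in\{1,2\}$ let $\mathcal{D}_i$ be a coherent set of desirable gambles on $\mathcal{X}_i$. Then $$\mathcal{D}_1\otimes\mathcal{D}_2:=\mathcal{E}\big(\mathcal{A}_{1\to2}\cup\mathcal{A}_{2\to1}\big),$$ where $\mathcal{A}_{1\to2}:=\{f_2(X_2)\mathbb{I}_{B_1}(X_1)\colon f_2\in\mathcal{D}_2,\ B_1\in\mathcal{B}_1\cup\{\mathcal{X}_1\}\}$ and $\mathcal{A}_{2\to1}:=\{f_1(X_1)\mathbb{I}_{B_2}(X_2)\colon f_1\in\mathcal{D}_1,\ B_2\in\mathcal{B}_2\cup\{\mathcal{X}_2\}\}$, is the independent natural extension of $\mathcal{D}_1$ and $\mathcal{D}_2$; that is, it is an independent product of $\mathcal{D}_1$ and $\mathcal{D}_2$, and it is a subset of every independent product of $\mathcal{D}_1$ and $\mathcal{D}_2$.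
   Context: A gamble on a non-empty set $\mathcal{X}$ is a bounded function $\mathcal{X}\to\mathbb{R}$; $\mathcal{G}(\mathcal{X})$ denotes the set of gambles and $\mathcal{G}_{>0}(\mathcal{X})$ the set of non-negative gambles that are not identically zero. $\mathbb{I}_A$ is the indicator of $A$. For $\mathcal{A}\subseteq\mathcal{G}(\mathcal{X})$, $\mathrm{posi}(\mathcal{A}):=\{\sum_{i=1}^n\lambda_if_i\colon n\in\mathbb{N}, \lambda_i\in\mathbb{R}_{>0}, f_i\in\mathcal{A}\}$ and $\mathcal{E}(\mathcal{A}):=\mathrm{posi}(\mathcal{A}\cup\mathcal{G}_{>0}(\mathcal{X}))$. A coherent set of desirable gambles on $\mathcal{X}$ is a set $\mathcal{D}\subseteq\mathcal{G}(\mathcal{X})$ such that for all $f,g\in\mathcal{G}(\mathcal{X})$ and $\lambda>0$: (D1) if $f\geq0$ and $f\neq0$ then $f\in\mathcal{D}$; (D2) if $f\in\mathcal{D}$ then $\lambda f\in\mathcal{D}$; (D3) if $f,g\in\mathcal{D}$ then $f+g\in\mathcal{D}$; (D4) if $f\leq0$ then $f\notin\mathcal{D}$. For $i\in\{1,2\}$, a gamble $f$ on $\mathcal{X}_i$ is identified with its cylindrical extension $f(X_i)$ on $\mathcal{X}_1\times\mathcal{X}_2$, $f(X_i)(x_1,x_2):=f(x_i)$; similarly an event $B\subseteq\mathcal{X}_1$ is identified with $B\times\mathcal{X}_2$ and $B\subseteq\mathcal{X}_2$ with $\mathcal{X}_1\times B$. For a set $\mathcal{D}$ of gambles on $\mathcal{X}_1\times\mathcal{X}_2$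 and $\{i,j\}=\{1,2\}$, let $\mathrm{marg}_i(\mathcal{D}):=\{f\in\mathcal{G}(\mathcal{X}_i)\colon f(X_i)\in\mathcal{D}\}$ and, for non-empty $B_j\subseteq\mathcal{X}_j$, $\mathrm{marg}_i(\mathcal{D}\rfloor B_j):=\{f\in\mathcal{G}(\mathcal{X}_i)\colon f(X_i)\mathbb{I}_{B_j}(X_j)\in\mathcal{D}\}$. A coherent set of desirable gambles $\mathcal{D}$ on $\mathcal{X}_1\times\mathcal{X}_2$ is epistemically independent (w.r.t. $\mathcal{B}_1,\mathcal{B}_2$) if $\mathrm{marg}_i(\mathcal{D}\rfloor B_j)=\mathrm{marg}_i(\mathcal{D})$ for all $\{i,j\}=\{1,2\}$ and all $B_j\in\mathcal{B}_j$. An independent product of $\mathcal{D}_1$ and $\mathcal{D}_2$ is an epistemically independent coherent set of desirable gambles $\mathcal{D}$ on $\mathcal{X}_1\times\mathcal{X}_2$ with $\mathrm{marg}_1(\mathcal{D})=\mathcal{D}_1$ and $\mathrm{marg}_2(\mathcal{D})=\mathcal{D}_2$. The independent natural extension is the smallest (w.r.t. inclusion) independent product. *)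

theory Defs
  imports Main "HOL-Library.Indicator_Function"
begin

text \<open>Sets of conditioning events and the possibility spaces are modelled by types:
  the possibility space X_i is UNIV of type 'a resp. 'b (types are non-empty and of
  arbitrary cardinality).\<close>

definition gambles :: "('x \<Rightarrow> real) set" where
  "gambles = {f. \<exists>M. \<forall>x. \<bar>f x\<bar> \<le> M}"

definition pos_gambles :: "('x \<Rightarrow> real) set" where
  "pos_gambles = {f \<in> gambles. (\<forall>x. f x \<ge> 0) \<and> f \<noteq> (\<lambda>_. 0)}"

definition posi :: "('x \<Rightarrow> real) set \<Rightarrow> ('x \<Rightarrow> real) set" where
  "posi A = {g. \<exists>(n::nat) (lam::nat \<Rightarrow> real) (f::nat \<Rightarrow> 'x \<Rightarrow> real).
      n \<ge> 1 \<and> (\<forall>i<n. lam i > 0 \<and> f i \<in> A) \<and> g = (\<lambda>x. \<Sum>i<n. lam i * f i x)}"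

definition natext :: "('x \<Rightarrow> real) set \<Rightarrow> ('x \<Rightarrow> real) set" where
  "natext A = posi (A \<union> pos_gambles)"

definition coherent :: "('x \<Rightarrow> real) set \<Rightarrow> bool" where
  "coherent D \<longleftrightarrow> D \<subseteq> gambles \<and>
     (\<forall>f \<in> gambles. (\<forall>x. f x \<ge> 0) \<and> f \<noteq> (\<lambda>_. 0) \<longrightarrow> f \<in> D) \<and>
     (\<forall>f \<in> D. \<forall>lam::real. lam > 0 \<longrightarrow> (\<lambda>x. lam * f x) \<in> D) \<and>
     (\<forall>f \<in> D. \<forall>g \<in> D. (\<lambda>x. f x + g x) \<in> D) \<and>
     (\<forall>f \<in> gambles. (\<forall>x. f x \<le> 0) \<longrightarrow> f \<notin> D)"

definition cyl1 :: "('a \<Rightarrow> real) \<Rightarrow> ('a \<times> 'b \<Rightarrow> real)" where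
  "cyl1 f = (\<lambda>(x1, x2). f x1)"

definition cyl2 :: "('b \<Rightarrow> real) \<Rightarrow> ('a \<times> 'b \<Rightarrow> real)" where
  "cyl2 f = (\<lambda>(x1, x2). f x2)"

definition marg1 :: "('a \<times> 'b \<Rightarrow> real) set \<Rightarrow> ('a \<Rightarrow> real) set" where
  "marg1 D = {f \<in> gambles. cyl1 f \<in> D}"

definition marg2 :: "('a \<times> 'b \<Rightarrow> real) set \<Rightarrow> ('b \<Rightarrow> real) set" where
  "marg2 D = {f \<in> gambles. cyl2 f \<in> D}"

definition marg1_cond :: "('a \<times> 'b \<Rightarrow> real) set \<Rightarrow> 'b set \<Rightarrow> ('a \<Rightarrow> real) set" where
  "marg1_cond D B2 = {f \<in> gambles. (\<lambda>(x1, x2). f x1 * indicator B2 x2) \<in> D}"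

definition marg2_cond :: "('a \<times> 'b \<Rightarrow> real) set \<Rightarrow> 'a set \<Rightarrow> ('b \<Rightarrow> real) set" where
  "marg2_cond D B1 = {f \<in> gambles. (\<lambda>(x1, x2). f x2 * indicator B1 x1) \<in> D}"

definition epist_indep :: "'a set set \<Rightarrow> 'b set set \<Rightarrow> ('a \<times> 'b \<Rightarrow> real) set \<Rightarrow> bool" where
  "epist_indep \<B>1 \<B>2 D \<longleftrightarrow> coherent D \<and>
     (\<forall>B2 \<in> \<B>2. marg1_cond D B2 = marg1 D) \<and>
     (\<forall>B1 \<in> \<B>1. marg2_cond D B1 = marg2 D)"

definition indep_product ::
  "'a set set \<Rightarrow> 'b set set \<Rightarrow> ('a \<Rightarrow> real) set \<Rightarrow> ('b \<Rightarrow> real) set \<Rightarrow> ('a \<times> 'b \<Rightarrow> real) set \<Rightarrow> bool" where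
  "indep_product \<B>1 \<B>2 D1 D2 D \<longleftrightarrow> epist_indep \<B>1 \<B>2 D \<and> marg1 D = D1 \<and> marg2 D = D2"

definition A12 :: "'a set set \<Rightarrow> ('b \<Rightarrow> real) set \<Rightarrow> ('a \<times> 'b \<Rightarrow> real) set" where
  "A12 \<B>1 D2 = {(\<lambda>(x1, x2). f2 x2 * indicator B1 x1) | f2 B1. f2 \<in> D2 \<and> B1 \<in> \<B>1 \<union> {UNIV}}"

definition A21 :: "'b set set \<Rightarrow> ('a \<Rightarrow> real) set \<Rightarrow> ('a \<times> 'b \<Rightarrow> real) set" where
  "A21 \<B>2 D1 = {(\<lambda>(x1, x2). f1 x1 * indicator B2 x2) | f1 B2. f1 \<in> D1 \<and> B2 \<in> \<B>2 \<union> {UNIV}}"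

definition indep_nat_ext ::
  "'a set set \<Rightarrow> 'b set set \<Rightarrow> ('a \<Rightarrow> real) set \<Rightarrow> ('b \<Rightarrow> real) set \<Rightarrow> ('a \<times> 'b \<Rightarrow> real) set" where
  "indep_nat_ext \<B>1 \<B>2 D1 D2 = natext (A12 \<B>1 D2 \<union> A21 \<B>2 D1)"

end

theory Submission
  imports Defs
begin

definition Mx :: "nat \<Rightarrow> (nat \<Rightarrow> real) \<Rightarrow> real" where
  "Mx n v = Max ((\<lambda>k. v k) ` {..<n})"

lemma Mx_ge: "k < n \<Longrightarrow> v k \<le> Mx n v"
  unfolding Mx_def by (rule Max_ge) auto

lemma Mx_le: "n \<ge> 1 \<Longrightarrow> (\<And>k. k < n \<Longrightarrow> v k \<le> B) \<Longrightarrow> Mx n v \<le> B"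
  unfolding Mx_def by (subst Max_le_iff) (auto simp: lessThan_empty_iff)

lemma Mx_in: "n \<ge> 1 \<Longrightarrow> \<exists>k<n. Mx n v = v k"
proof -
  assume "n \<ge> 1"
  then have "Mx n v \<in> (\<lambda>k. v k) ` {..<n}" unfolding Mx_def by (intro Max_in) (auto simp: lessThan_empty_iff)
  then show ?thesis by auto
qed

lemma Mx_add: "n \<ge> 1 \<Longrightarrow> Mx n (\<lambda>k. v k + w k) \<le> Mx n v + Mx n w"
  by (rule Mx_le) (auto intro: add_mono Mx_ge)

lemma Mx_scale: assumes "n \<ge> 1" "t > 0" shows "Mx n (\<lambda>k. t * v k) = t * Mx n v"
proof (rule antisym)
  show "Mx n (\<lambda>k. t * v k) \<le> t * Mx n v"
    using assms by (intro Mx_le) (auto intro: Mx_ge mult_left_mono)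
  obtain k where k: "k < n" "Mx n v = v k" using Mx_in[OF assms(1)] by blast
  show "t * Mx n v \<le> Mx n (\<lambda>k. t * v k)" using k Mx_ge[of k n "\<lambda>k. t * v k"] by simp
qed

lemma gordan:
  fixes n :: nat and G :: "(nat \<Rightarrow> real) set"
  assumes n: "n \<ge> 1"
    and add: "\<And>c d. c \<in> G \<Longrightarrow> d \<in> G \<Longrightarrow> (\<lambda>k. c k + d k) \<in> G"
    and scl: "\<And>c t. c \<in> G \<Longrightarrow> t > 0 \<Longrightarrow> (\<lambda>k. t * c k) \<in> G"
    and nn: "\<And>c. c \<in> G \<Longrightarrow> \<exists>k<n. c k \<ge> 0"
  shows "\<exists>\<mu>. (\<forall>k<n. \<mu> k \<ge> 0) \<and> (\<exists>k<n. \<mu> k > 0) \<and> (\<forall>c\<in>G. (\<Sum>k<n. \<mu> k * c k) \<ge> 0)"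
proof -
  define G0 where "G0 = insert (\<lambda>k. 0) G"
  have add0: "(\<lambda>k. c k + d k) \<in> G0" if "c \<in> G0" "d \<in> G0" for c d
    using that add unfolding G0_def by auto
  have scl0: "(\<lambda>k. t * c k) \<in> G0" if "c \<in> G0" "t > 0" for c t
    using that scl unfolding G0_def by auto
  have mx0: "Mx n c \<ge> 0" if "c \<in> G0" for c
  proof (cases "c \<in> G")
    case True
    then obtain k where "k < n" "c k \<ge> 0" using nn by blast
    then show ?thesis using Mx_ge[of k n c] by linarith
  next
    case False
    then have "c = (\<lambda>k. 0)" using that unfolding G0_def by auto
    then show ?thesis using Mx_ge[of 0 n c] n by simp
  qed
  define Inv where "Inv m \<mu> \<longleftrightarrow> (\<forall>x. (\<forall>k\<ge>m. x k = 0) \<longrightarrow>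
      (\<forall>c\<in>G0. (\<Sum>k<m. \<mu> k * x k) \<le> Mx n (\<lambda>k. x k + c k)))" for m \<mu>
  have step: "\<exists>\<mu>. Inv m \<mu>" if "m \<le> n" for m
    using that
  proof (induction m)
    case 0
    have "Inv 0 (\<lambda>k. 0)" unfolding Inv_def
    proof (intro allI impI ballI)
      fix x :: "nat \<Rightarrow> real" and c assume "\<forall>k\<ge>0. x k = 0" "c \<in> G0"
      then have "(\<lambda>k. x k + c k) = c" by auto
      then show "(\<Sum>k<0. 0 * x k) \<le> Mx n (\<lambda>k. x k + c k)" using mx0[OF \<open>c \<in> G0\<close>] by simp
    qed
    then show ?case by blast
  next
    case (Suc m)
    then obtain \<mu> where inv: "Inv m \<mu>" by auto
    have mn: "m < n" using Suc by simp
    define L where "L y = (\<Sum>k<m. \<mu> k * y k)" for y :: "nat \<Rightarrow> real"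
    define e where "e = (\<lambda>k. if k = m then 1 else (0::real))"
    define Lo where "Lo = {L y - Mx n (\<lambda>k. y k - e k + c k) | y c. (\<forall>k\<ge>m. y k = 0) \<and> c \<in> G0}"
    define U where "U = {Mx n (\<lambda>k. y k + e k + c k) - L y | y c. (\<forall>k\<ge>m. y k = 0) \<and> c \<in> G0}"
    have Ladd: "L (\<lambda>k. y1 k + y2 k) = L y1 + L y2" for y1 y2
      unfolding L_def by (simp add: distrib_left sum.distrib)
    have Lscl: "L (\<lambda>k. t * y k) = t * L y" for t y
      unfolding L_def by (simp add: sum_distrib_left algebra_simps)
    have invI: "L y \<le> Mx n (\<lambda>k. y k + c k)" if "\<forall>k\<ge>m. y k = 0" "c \<in> G0" for y c
      using inv that unfolding Inv_def L_def by blast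
    have sep: "l \<le> u" if "l \<in> Lo" "u \<in> U" for l u
    proof -
      obtain y1 c1 where 1: "l = L y1 - Mx n (\<lambda>k. y1 k - e k + c1 k)" "\<forall>k\<ge>m. y1 k = 0" "c1 \<in> G0"
        using \<open>l \<in> Lo\<close> unfolding Lo_def by blast
      obtain y2 c2 where 2: "u = Mx n (\<lambda>k. y2 k + e k + c2 k) - L y2" "\<forall>k\<ge>m. y2 k = 0" "c2 \<in> G0"
        using \<open>u \<in> U\<close> unfolding U_def by blast
      have "L (\<lambda>k. y1 k + y2 k) \<le> Mx n (\<lambda>k. (y1 k + y2 k) + (c1 k + c2 k))"
        using 1 2 by (intro invI add0) auto
      also have "(\<lambda>k. (y1 k + y2 k) + (c1 k + c2 k)) =
          (\<lambda>k. (y1 k - e k + c1 k) + (y2 k + e k + c2 k))" by (auto simp: algebra_simps)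
      also have "Mx n \<dots> \<le> Mx n (\<lambda>k. y1 k - e k + c1 k) + Mx n (\<lambda>k. y2 k + e k + c2 k)"
        using Mx_add[OF n, of "\<lambda>k. y1 k - e k + c1 k" "\<lambda>k. y2 k + e k + c2 k"] by simp
      finally show ?thesis using 1 2 Ladd by simp
    qed
    have memLo: "L y - Mx n (\<lambda>k. y k - e k + c k) \<in> Lo" if "\<forall>k\<ge>m. y k = 0" "c \<in> G0" for y c
      unfolding Lo_def using that by blast
    have memU: "Mx n (\<lambda>k. y k + e k + c k) - L y \<in> U" if "\<forall>k\<ge>m. y k = 0" "c \<in> G0" for y c
      unfolding U_def using that by blast
    have z0: "(\<lambda>k. 0) \<in> G0" unfolding G0_def by simp
    have LoNE: "Lo \<noteq> {}" using memLo[of "\<lambda>k. 0", OF _ z0] by auto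
    have "U \<noteq> {}" using memU[of "\<lambda>k. 0", OF _ z0] by auto
    then obtain u0 where "u0 \<in> U" by blast
    have bdd: "bdd_above Lo" using sep \<open>u0 \<in> U\<close> by (auto simp: bdd_above_def)
    define a where "a = Sup Lo"
    have aLo: "l \<le> a" if "l \<in> Lo" for l unfolding a_def using cSup_upper[OF that bdd] .
    have aU: "a \<le> u" if "u \<in> U" for u unfolding a_def using LoNE sep that by (intro cSup_least) auto
    have "Inv (Suc m) (\<mu>(m := a))" unfolding Inv_def
    proof (intro allI impI ballI)
      fix x :: "nat \<Rightarrow> real" and c assume x: "\<forall>k\<ge>Suc m. x k = 0" and c: "c \<in> G0"
      define t where "t = x m"
      define y where "y = x(m := 0)"
      have y0: "\<forall>k\<ge>m. y k = 0" using x unfolding y_def by auto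
      have xe: "x k = y k + t * e k" for k unfolding y_def t_def e_def by auto
      have sumeq: "(\<Sum>k<Suc m. (\<mu>(m := a)) k * x k) = L y + a * t"
        unfolding L_def y_def t_def by (simp add: lessThan_Suc)
      have goal: "L y + a * t \<le> Mx n (\<lambda>k. x k + c k)"
      proof (cases "t = 0")
        case True
        then have "x = y" using xe by auto
        then show ?thesis using invI[OF y0 c] True by simp
      next
        case False
        show ?thesis
        proof (cases "t > 0")
          case True
          have yy: "\<forall>k\<ge>m. (\<lambda>k. (1/t) * y k) k = 0" using y0 by auto
          have cc: "(\<lambda>k. (1/t) * c k) \<in> G0" using scl0[OF c, of "1/t"] True by simp
          have "Mx n (\<lambda>k. (1/t) * y k + e k + (1/t) * c k) - L (\<lambda>k. (1/t) * y k) \<in> U"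
            using memU[OF yy cc] by simp
          then have "a \<le> Mx n (\<lambda>k. (1/t) * y k + e k + (1/t) * c k) - L (\<lambda>k. (1/t) * y k)" by (rule aU)
          also have "(\<lambda>k. (1/t) * y k + e k + (1/t) * c k) = (\<lambda>k. (1/t) * (x k + c k))"
            using True by (auto simp: xe field_simps)
          also have "Mx n \<dots> = (1/t) * Mx n (\<lambda>k. x k + c k)" using Mx_scale[OF n, of "1/t" "\<lambda>k. x k + c k"] True by simp
          finally have "a \<le> (1/t) * Mx n (\<lambda>k. x k + c k) - (1/t) * L y" using Lscl[of "1/t" y] by simp
          then have "a \<le> (Mx n (\<lambda>k. x k + c k) - L y) / t" by (simp add: diff_divide_distrib)
          then have "a * t \<le> Mx n (\<lambda>k. x k + c k) - L y" using True by (simp add: pos_le_divide_eq)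
          then show ?thesis by (simp add: algebra_simps)
        next
          case False
          then have "-t > 0" using \<open>t \<noteq> 0\<close> by simp
          then obtain s where s: "s > 0" and ts: "t = - s" by (intro that[of "-t"]) auto
          have yy: "\<forall>k\<ge>m. (\<lambda>k. (1/s) * y k) k = 0" using y0 by auto
          have cc: "(\<lambda>k. (1/s) * c k) \<in> G0" using scl0[OF c, of "1/s"] s by simp
          have "L (\<lambda>k. (1/s) * y k) - Mx n (\<lambda>k. (1/s) * y k - e k + (1/s) * c k) \<in> Lo"
            using memLo[OF yy cc] by simp
          then have "L (\<lambda>k. (1/s) * y k) - Mx n (\<lambda>k. (1/s) * y k - e k + (1/s) * c k) \<le> a" by (rule aLo)
          also have "(\<lambda>k. (1/s) * y k - e k + (1/s) * c k) = (\<lambda>k. (1/s) * (x k + c k))"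
            using s ts by (auto simp: xe field_simps)
          also have "Mx n \<dots> = (1/s) * Mx n (\<lambda>k. x k + c k)" using Mx_scale[OF n, of "1/s" "\<lambda>k. x k + c k"] s by simp
          finally have "(1/s) * L y - (1/s) * Mx n (\<lambda>k. x k + c k) \<le> a" using Lscl[of "1/s" y] by simp
          then have "(L y - Mx n (\<lambda>k. x k + c k)) / s \<le> a" by (simp add: diff_divide_distrib)
          then have "L y - Mx n (\<lambda>k. x k + c k) \<le> a * s" using s by (simp add: pos_divide_le_eq)
          then show ?thesis unfolding ts by (simp add: algebra_simps)
        qed
      qed
      show "(\<Sum>k<Suc m. (\<mu>(m := a)) k * x k) \<le> Mx n (\<lambda>k. x k + c k)"
        using sumeq goal by simp
    qed
    then show ?case by blast
  qed
  obtain \<mu> where inv: "Inv n \<mu>" using step by blast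
  have z: "(\<lambda>k. 0) \<in> G0" unfolding G0_def by simp
  have H: "(\<Sum>k<n. \<mu> k * x k) \<le> Mx n (\<lambda>k. x k + c k)" if "\<forall>k\<ge>n. x k = 0" "c \<in> G0" for x c
    using inv that unfolding Inv_def by blast
  have pos: "\<mu> k \<ge> 0" if "k < n" for k
  proof -
    define x where "x = (\<lambda>i. if i = k then -1 else (0::real))"
    have "(\<Sum>i<n. \<mu> i * x i) \<le> Mx n (\<lambda>i. x i + 0)"
      using H[OF _ z, of x] that unfolding x_def by auto
    moreover have "(\<Sum>i<n. \<mu> i * x i) = - \<mu> k" using that unfolding x_def
      by (simp add: if_distrib cong: if_cong)
    moreover have "Mx n (\<lambda>i. x i + 0) \<le> 0" using n unfolding x_def by (intro Mx_le) auto
    ultimately show ?thesis by simp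
  qed
  have one: "(\<Sum>i<n. \<mu> i) \<ge> 1"
  proof -
    define x where "x = (\<lambda>i. if i < n then -1 else (0::real))"
    have "(\<Sum>i<n. \<mu> i * x i) \<le> Mx n (\<lambda>i. x i + 0)"
      using H[OF _ z, of x] unfolding x_def by auto
    moreover have "(\<Sum>i<n. \<mu> i * x i) = - (\<Sum>i<n. \<mu> i)" unfolding x_def
      by (simp add: sum_negf)
    moreover have "Mx n (\<lambda>i. x i + 0) \<le> -1" using n unfolding x_def by (intro Mx_le) auto
    ultimately show ?thesis by simp
  qed
  have ex: "\<exists>k<n. \<mu> k > 0"
  proof (rule ccontr)
    assume "\<not> ?thesis"
    then have "(\<Sum>i<n. \<mu> i) \<le> 0" by (intro sum_nonpos) auto
    then show False using one by simp
  qed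
  have "(\<Sum>k<n. \<mu> k * c k) \<ge> 0" if "c \<in> G" for c
  proof -
    define x where "x = (\<lambda>i. if i < n then - c i else (0::real))"
    have "(\<Sum>i<n. \<mu> i * x i) \<le> Mx n (\<lambda>i. x i + c i)"
      using H[of x c] that unfolding x_def G0_def by auto
    moreover have "(\<Sum>i<n. \<mu> i * x i) = - (\<Sum>i<n. \<mu> i * c i)" unfolding x_def
      by (simp add: sum_negf)
    moreover have "Mx n (\<lambda>i. x i + c i) \<le> 0" using n unfolding x_def by (intro Mx_le) auto
    ultimately show ?thesis by simp
  qed
  then show ?thesis using pos ex by blast
qed


section \<open>Basic facts on gambles and coherence\<close>

lemma gamblesI: "(\<And>x. \<bar>f x\<bar> \<le> M) \<Longrightarrow> f \<in> gambles"
  unfolding gambles_def by blast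

lemma gambles_add: "f \<in> gambles \<Longrightarrow> g \<in> gambles \<Longrightarrow> (\<lambda>x. f x + g x) \<in> gambles"
proof -
  assume "f \<in> gambles" "g \<in> gambles"
  then obtain M N where MN: "\<forall>x. \<bar>f x\<bar> \<le> M" "\<forall>x. \<bar>g x\<bar> \<le> N" unfolding gambles_def by blast
  have "\<bar>f x + g x\<bar> \<le> M + N" for x
    using abs_triangle_ineq[of "f x" "g x"] MN[rule_format, of x] by linarith
  then show ?thesis by (rule gamblesI)
qed

lemma gambles_scale: "f \<in> gambles \<Longrightarrow> (\<lambda>x. t * f x) \<in> gambles"
proof -
  assume "f \<in> gambles"
  then obtain M where M: "\<forall>x. \<bar>f x\<bar> \<le> M" unfolding gambles_def by blast
  have "\<bar>t * f x\<bar> \<le> \<bar>t\<bar> * M" for x using M by (simp add: abs_mult mult_left_mono)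
  then show ?thesis by (rule gamblesI)
qed

lemma gambles_diff: "f \<in> gambles \<Longrightarrow> g \<in> gambles \<Longrightarrow> (\<lambda>x. f x - g x) \<in> gambles"
  using gambles_add[of f "\<lambda>x. -1 * g x"] gambles_scale[of g "-1"] by simp

lemma gambles_zero: "(\<lambda>x. 0) \<in> gambles"
  by (rule gamblesI[of _ 0]) simp

lemma gambles_sum: fixes N :: nat shows "(\<And>i. i < N \<Longrightarrow> f i \<in> gambles) \<Longrightarrow> (\<lambda>x. \<Sum>i<N. f i x) \<in> gambles"
proof (induction N)
  case 0 then show ?case using gambles_zero by simp
next
  case (Suc N)
  then have "(\<lambda>x. (\<Sum>i<N. f i x) + f N x) \<in> gambles" by (intro gambles_add) auto
  then show ?case by simp
qed

lemma gambles_ind_sum: "(\<lambda>x. \<Sum>k<(n::nat). c k * indicator (F k) x) \<in> gambles"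
proof -
  have "(\<lambda>x. c k * indicator (F k) x) \<in> gambles" for k
    by (rule gambles_scale, rule gamblesI[of _ 1]) (auto simp: indicator_def)
  then show ?thesis using gambles_sum[of n "\<lambda>k x. c k * indicator (F k) x"] by simp
qed

lemma gambles_section: "g \<in> gambles \<Longrightarrow> (\<lambda>x2. g (x1, x2)) \<in> gambles"
  unfolding gambles_def by blast

lemma coh_gamble: "coherent D \<Longrightarrow> f \<in> D \<Longrightarrow> f \<in> gambles"
  unfolding coherent_def by blast

lemma coh_add: "coherent D \<Longrightarrow> f \<in> D \<Longrightarrow> g \<in> D \<Longrightarrow> (\<lambda>x. f x + g x) \<in> D"
  unfolding coherent_def by blast

lemma coh_scale: "coherent D \<Longrightarrow> f \<in> D \<Longrightarrow> t > 0 \<Longrightarrow> (\<lambda>x. t * f x) \<in> D"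
  unfolding coherent_def by blast

lemma coh_pos: "coherent D \<Longrightarrow> f \<in> gambles \<Longrightarrow> (\<forall>x. f x \<ge> 0) \<Longrightarrow> f \<noteq> (\<lambda>_. 0) \<Longrightarrow> f \<in> D"
  unfolding coherent_def by blast

lemma coh_le0: "coherent D \<Longrightarrow> f \<in> D \<Longrightarrow> (\<forall>x. f x \<le> 0) \<Longrightarrow> False"
  unfolding coherent_def by blast

lemma coh_up: assumes "coherent D" "f \<in> D" "p \<in> gambles" "\<forall>x. p x \<ge> 0"
  shows "(\<lambda>x. f x + p x) \<in> D"
proof (cases "p = (\<lambda>_. 0)")
  case True then show ?thesis using assms by simp
next
  case False then show ?thesis using assms coh_pos coh_add by blast
qed

definition C0 :: "('x \<Rightarrow> real) set \<Rightarrow> ('x \<Rightarrow> real) set" where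
  "C0 D = insert (\<lambda>_. 0) D"

lemma C0_add: "coherent D \<Longrightarrow> f \<in> C0 D \<Longrightarrow> g \<in> C0 D \<Longrightarrow> (\<lambda>x. f x + g x) \<in> C0 D"
  unfolding C0_def using coh_add by fastforce

lemma C0_scale: "coherent D \<Longrightarrow> f \<in> C0 D \<Longrightarrow> t > 0 \<Longrightarrow> (\<lambda>x. t * f x) \<in> C0 D"
  unfolding C0_def using coh_scale by fastforce

lemma C0_up: assumes "coherent D" "f \<in> C0 D" "p \<in> gambles" "\<forall>x. p x \<ge> 0"
  shows "(\<lambda>x. f x + p x) \<in> C0 D"
proof (cases "f \<in> D")
  case True then show ?thesis using coh_up[OF assms(1) True assms(3,4)] unfolding C0_def by simp
next
  case False
  then have "f = (\<lambda>_. 0)" using assms(2) unfolding C0_def by simp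
  then show ?thesis using coh_pos[OF assms(1) assms(3,4)] unfolding C0_def by auto
qed

lemma C0_gamble: "coherent D \<Longrightarrow> f \<in> C0 D \<Longrightarrow> f \<in> gambles"
  unfolding C0_def using coh_gamble gambles_zero by blast

lemma poscomb:
  fixes n :: nat
  assumes "coherent D" "\<forall>k<n. \<mu> k \<ge> 0 \<and> f k \<in> D" "\<exists>k<n. \<mu> k > 0"
  shows "(\<lambda>x. \<Sum>k<n. \<mu> k * f k x) \<in> D"
  using assms(2,3)
proof (induction n)
  case 0 then show ?case by simp
next
  case (Suc n)
  have fn: "f n \<in> D" "\<mu> n \<ge> 0" using Suc.prems by auto
  show ?case
  proof (cases "\<exists>k<n. \<mu> k > 0")
    case True
    then have IH: "(\<lambda>x. \<Sum>k<n. \<mu> k * f k x) \<in> D" using Suc by auto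
    show ?thesis
    proof (cases "\<mu> n > 0")
      case True
      have "(\<lambda>x. (\<Sum>k<n. \<mu> k * f k x) + \<mu> n * f n x) \<in> D"
        using coh_add[OF assms(1) IH coh_scale[OF assms(1) fn(1) True]] by simp
      then show ?thesis by simp
    next
      case False
      then have "\<mu> n = 0" using fn by simp
      then show ?thesis using IH by simp
    qed
  next
    case False
    have z: "\<forall>k<n. \<mu> k = 0"
    proof (intro allI impI)
      fix k assume "k < n"
      then have "\<mu> k \<ge> 0" using Suc.prems by auto
      moreover have "\<not> \<mu> k > 0" using False \<open>k < n\<close> by auto
      ultimately show "\<mu> k = 0" by simp
    qed
    then have "\<mu> n > 0" using Suc.prems False less_Suc_eq by auto
    moreover have "(\<Sum>k<n. \<mu> k * f k x) = 0" for x using z by simp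
    ultimately show ?thesis using coh_scale[OF assms(1) fn(1)] by simp
  qed
qed

lemma sum_split_nat: "(\<Sum>k<n + (m::nat). f k) = (\<Sum>k<n. f k) + (\<Sum>k<m. f (n + k)::real)"
  by (induction m) (auto simp: add.assoc)


lemma D_C0_add: "coherent D \<Longrightarrow> f \<in> D \<Longrightarrow> g \<in> C0 D \<Longrightarrow> (\<lambda>x. f x + g x) \<in> D"
  unfolding C0_def using coh_add by fastforce

section \<open>posi\<close>

lemma posi_base: "f \<in> A \<Longrightarrow> f \<in> posi A"
  unfolding posi_def
  by (rule CollectI, rule exI[of _ 1], rule exI[of _ "\<lambda>_. 1"], rule exI[of _ "\<lambda>_. f"]) auto

lemma posi_scale: assumes "g \<in> posi A" "t > 0" shows "(\<lambda>x. t * g x) \<in> posi A"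
proof -
  obtain n :: nat and lam f where h: "n \<ge> 1" "\<forall>i<n. lam i > 0 \<and> f i \<in> A" "g = (\<lambda>x. \<Sum>i<n. lam i * f i x)"
    using assms(1) unfolding posi_def by blast
  have "(\<lambda>x. t * g x) = (\<lambda>x. \<Sum>i<n. (t * lam i) * f i x)"
    using h(3) by (simp add: sum_distrib_left mult.assoc)
  moreover have "\<forall>i<n. t * lam i > 0 \<and> f i \<in> A" using h(2) assms(2) by simp
  ultimately show ?thesis unfolding posi_def using h(1)
    by (intro CollectI exI[of _ n] exI[of _ "\<lambda>i. t * lam i"] exI[of _ f]) auto
qed

lemma posi_add: assumes "g \<in> posi A" "g' \<in> posi A" shows "(\<lambda>x. g x + g' x) \<in> posi A"
proof -
  obtain n :: nat and lam f where h: "n \<ge> 1" "\<forall>i<n. lam i > 0 \<and> f i \<in> A" "g = (\<lambda>x. \<Sum>i<n. lam i * f i x)"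
    using assms(1) unfolding posi_def by blast
  obtain n' :: nat and lam' f' where h': "n' \<ge> 1" "\<forall>i<n'. lam' i > 0 \<and> f' i \<in> A" "g' = (\<lambda>x. \<Sum>i<n'. lam' i * f' i x)"
    using assms(2) unfolding posi_def by blast
  define L where "L i = (if i < n then lam i else lam' (i - n))" for i
  define F where "F i = (if i < n then f i else f' (i - n))" for i
  have "(\<lambda>x. g x + g' x) = (\<lambda>x. \<Sum>i<n + n'. L i * F i x)"
  proof
    fix x
    have "(\<Sum>i<n + n'. L i * F i x) = (\<Sum>i<n. L i * F i x) + (\<Sum>i<n'. L (n + i) * F (n + i) x)"
      by (rule sum_split_nat)
    also have "(\<Sum>i<n. L i * F i x) = g x" using h(3) unfolding L_def F_def by simp
    also have "(\<Sum>i<n'. L (n + i) * F (n + i) x) = g' x" using h'(3) unfolding L_def F_def by simp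
    finally show "g x + g' x = (\<Sum>i<n + n'. L i * F i x)" by simp
  qed
  moreover have "\<forall>i<n + n'. L i > 0 \<and> F i \<in> A" using h(2) h'(2) unfolding L_def F_def by auto
  ultimately show ?thesis unfolding posi_def using h(1)
    by (intro CollectI exI[of _ "n + n'"] exI[of _ L] exI[of _ F]) auto
qed

lemma posi_mono: "A \<subseteq> B \<Longrightarrow> posi A \<subseteq> posi B"
  unfolding posi_def by blast

lemma posi_induct:
  assumes "g \<in> posi A" and base: "\<And>f. f \<in> A \<Longrightarrow> P f"
    and scl: "\<And>f t. P f \<Longrightarrow> t > 0 \<Longrightarrow> P (\<lambda>x. t * f x)"
    and add: "\<And>f f'. P f \<Longrightarrow> P f' \<Longrightarrow> P (\<lambda>x. f x + f' x)"
  shows "P g"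
proof -
  obtain n :: nat and lam f where h: "n \<ge> 1" "\<forall>i<n. lam i > 0 \<and> f i \<in> A" "g = (\<lambda>x. \<Sum>i<n. lam i * f i x)"
    using assms(1) unfolding posi_def by blast
  have "N \<le> n \<Longrightarrow> N \<ge> 1 \<Longrightarrow> P (\<lambda>x. \<Sum>i<N. lam i * f i x)" for N
  proof (induction N)
    case 0 then show ?case by simp
  next
    case (Suc N)
    have fN: "P (\<lambda>x. lam N * f N x)" using Suc.prems h(2) base scl by auto
    show ?case
    proof (cases "N = 0")
      case True then show ?thesis using fN by simp
    next
      case False
      then have "P (\<lambda>x. \<Sum>i<N. lam i * f i x)" using Suc by auto
      from add[OF this fN] show ?thesis by simp
    qed
  qed
  then show ?thesis using h by simp
qed

lemma posi_gambles: "A \<subseteq> gambles \<Longrightarrow> posi A \<subseteq> gambles"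
  by (auto elim!: posi_induct intro: gambles_scale gambles_add)

lemma pos_gambles_sub: "pos_gambles \<subseteq> gambles"
  unfolding pos_gambles_def by auto

lemma coherent_natextI:
  assumes "A \<subseteq> gambles" and no: "\<And>g. g \<in> natext A \<Longrightarrow> \<forall>x. g x \<le> 0 \<Longrightarrow> False"
  shows "coherent (natext A)"
proof -
  have sub: "natext A \<subseteq> gambles" unfolding natext_def using assms(1) pos_gambles_sub
    by (intro posi_gambles) auto
  have pos: "f \<in> natext A" if "f \<in> gambles" "\<forall>x. f x \<ge> 0" "f \<noteq> (\<lambda>_. 0)" for f
    unfolding natext_def using that by (intro posi_base) (auto simp: pos_gambles_def)
  show ?thesis unfolding coherent_def
    using sub pos no posi_scale posi_add unfolding natext_def by blast
qed

lemma coherent_posi: "coherent D \<Longrightarrow> posi D \<subseteq> D"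
  by (auto elim!: posi_induct intro: coh_scale coh_add)

lemma coherent_natext_sub: "coherent D \<Longrightarrow> A \<subseteq> D \<Longrightarrow> natext A \<subseteq> D"
proof -
  assume c: "coherent D" "A \<subseteq> D"
  have "A \<union> pos_gambles \<subseteq> D" using c coh_pos unfolding pos_gambles_def by blast
  then have "posi (A \<union> pos_gambles) \<subseteq> posi D" by (rule posi_mono)
  then show ?thesis using coherent_posi[OF c(1)] unfolding natext_def by blast
qed


definition Pinv :: "('a \<Rightarrow> real) set \<Rightarrow> ('b \<Rightarrow> real) set \<Rightarrow> ('a \<times> 'b \<Rightarrow> real) \<Rightarrow> bool" where
  "Pinv D1 D2 g \<longleftrightarrow> (\<exists>(n::nat) b F h.
     (\<forall>x1 x2. g (x1, x2) = h (x1, x2) + (\<Sum>k<n. b k x1 * indicator (F k) x2)) \<and>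
     (\<forall>k<n. b k \<in> D1 \<and> F k \<noteq> {}) \<and>
     (\<forall>x1. (\<lambda>x2. h (x1, x2)) \<in> C0 D2) \<and>
     (n \<ge> 1 \<or> (\<exists>x1. (\<lambda>x2. h (x1, x2)) \<in> D2)))"

lemma PinvI:
  fixes n :: nat
  assumes "\<And>x1 x2. g (x1, x2) = h (x1, x2) + (\<Sum>k<n. b k x1 * indicator (F k) x2)"
    "\<And>k. k < n \<Longrightarrow> b k \<in> D1 \<and> F k \<noteq> {}"
    "\<And>x1. (\<lambda>x2. h (x1, x2)) \<in> C0 D2"
    "n \<ge> 1 \<or> (\<exists>x1. (\<lambda>x2. h (x1, x2)) \<in> D2)"
  shows "Pinv D1 D2 g"
  unfolding Pinv_def using assms by blast

lemma P_scale:
  assumes c1: "coherent D1" and c2: "coherent D2" and P: "Pinv D1 D2 g" and t: "t > 0"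
  shows "Pinv D1 D2 (\<lambda>z. t * g z)"
proof -
  obtain n :: nat and b F h where h:
    "\<forall>x1 x2. g (x1, x2) = h (x1, x2) + (\<Sum>k<n. b k x1 * indicator (F k) x2)"
    "\<forall>k<n. b k \<in> D1 \<and> F k \<noteq> {}" "\<forall>x1. (\<lambda>x2. h (x1, x2)) \<in> C0 D2"
    "n \<ge> 1 \<or> (\<exists>x1. (\<lambda>x2. h (x1, x2)) \<in> D2)"
    using P unfolding Pinv_def by blast
  show ?thesis
  proof (rule PinvI[where h="\<lambda>z. t * h z" and n=n and b="\<lambda>k x. t * b k x" and F=F])
    show "t * g (x1, x2) = t * h (x1, x2) + (\<Sum>k<n. t * b k x1 * indicator (F k) x2)" for x1 x2
      using h(1) by (simp add: distrib_left sum_distrib_left mult.assoc)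
    show "(\<lambda>x. t * b k x) \<in> D1 \<and> F k \<noteq> {}" if "k < n" for k
      using h(2) that coh_scale[OF c1 _ t] by auto
    show "(\<lambda>x2. t * h (x1, x2)) \<in> C0 D2" for x1
      using C0_scale[OF c2 h(3)[rule_format, of x1] t] by simp
    show "n \<ge> 1 \<or> (\<exists>x1. (\<lambda>x2. t * h (x1, x2)) \<in> D2)"
      using h(4) coh_scale[OF c2 _ t] by blast
  qed
qed

lemma P_add:
  assumes c1: "coherent D1" and c2: "coherent D2" and P: "Pinv D1 D2 g" and P': "Pinv D1 D2 g'"
  shows "Pinv D1 D2 (\<lambda>z. g z + g' z)"
proof -
  obtain n :: nat and b F h where h:
    "\<forall>x1 x2. g (x1, x2) = h (x1, x2) + (\<Sum>k<n. b k x1 * indicator (F k) x2)"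
    "\<forall>k<n. b k \<in> D1 \<and> F k \<noteq> {}" "\<forall>x1. (\<lambda>x2. h (x1, x2)) \<in> C0 D2"
    "n \<ge> 1 \<or> (\<exists>x1. (\<lambda>x2. h (x1, x2)) \<in> D2)"
    using P unfolding Pinv_def by blast
  obtain n' :: nat and b' F' h' where h':
    "\<forall>x1 x2. g' (x1, x2) = h' (x1, x2) + (\<Sum>k<n'. b' k x1 * indicator (F' k) x2)"
    "\<forall>k<n'. b' k \<in> D1 \<and> F' k \<noteq> {}" "\<forall>x1. (\<lambda>x2. h' (x1, x2)) \<in> C0 D2"
    "n' \<ge> 1 \<or> (\<exists>x1. (\<lambda>x2. h' (x1, x2)) \<in> D2)"
    using P' unfolding Pinv_def by blast
  define B where "B k = (if k < n then b k else b' (k - n))" for k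
  define FF where "FF k = (if k < n then F k else F' (k - n))" for k
  show ?thesis
  proof (rule PinvI[where h="\<lambda>z. h z + h' z" and n="n + n'" and b=B and F=FF])
    fix x1 x2
    have "(\<Sum>k<n + n'. B k x1 * indicator (FF k) x2) =
        (\<Sum>k<n. B k x1 * indicator (FF k) x2) + (\<Sum>k<n'. B (n + k) x1 * indicator (FF (n + k)) x2)"
      by (rule sum_split_nat)
    also have "(\<Sum>k<n. B k x1 * indicator (FF k) x2) = (\<Sum>k<n. b k x1 * indicator (F k) x2)"
      unfolding B_def FF_def by simp
    also have "(\<Sum>k<n'. B (n + k) x1 * indicator (FF (n + k)) x2) = (\<Sum>k<n'. b' k x1 * indicator (F' k) x2)"
      unfolding B_def FF_def by simp
    finally show "g (x1, x2) + g' (x1, x2) = h (x1, x2) + h' (x1, x2) + (\<Sum>k<n + n'. B k x1 * indicator (FF k) x2)"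
      using h(1) h'(1) by simp
  next
    fix k assume "k < n + n'"
    then show "B k \<in> D1 \<and> FF k \<noteq> {}" using h(2) h'(2) unfolding B_def FF_def by auto
  next
    fix x1 show "(\<lambda>x2. h (x1, x2) + h' (x1, x2)) \<in> C0 D2"
      using C0_add[OF c2 h(3)[rule_format, of x1] h'(3)[rule_format, of x1]] by simp
  next
    show "n + n' \<ge> 1 \<or> (\<exists>x1. (\<lambda>x2. h (x1, x2) + h' (x1, x2)) \<in> D2)"
    proof (cases "n + n' \<ge> 1")
      case False
      then have "n = 0" "n' = 0" by auto
      then obtain x1 where "(\<lambda>x2. h (x1, x2)) \<in> D2" using h(4) by auto
      then have "(\<lambda>x2. h (x1, x2) + h' (x1, x2)) \<in> D2"
        using D_C0_add[OF c2 _ h'(3)[rule_format, of x1]] by simp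
      then show ?thesis by blast
    qed simp
  qed
qed

lemma P_A12:
  assumes c2: "coherent D2" and "{} \<notin> \<B>1" and f2: "f2 \<in> D2" and B1: "B1 \<in> \<B>1 \<union> {UNIV}"
  shows "Pinv D1 D2 (\<lambda>(x1, x2). f2 x2 * indicator B1 x1)"
proof (rule PinvI[where h="\<lambda>(x1, x2). f2 x2 * indicator B1 x1" and n=0 and b="\<lambda>_ _. 0" and F="\<lambda>_. {}"])
  show "(\<lambda>x2. (case (x1, x2) of (x1, x2) \<Rightarrow> f2 x2 * indicator B1 x1)) \<in> C0 D2" for x1
    using f2 by (cases "x1 \<in> B1") (auto simp: C0_def)
  have "B1 \<noteq> {}" using assms B1 by auto
  then obtain x1 where "x1 \<in> B1" by blast
  then have "(\<lambda>x2. (case (x1, x2) of (x1, x2) \<Rightarrow> f2 x2 * indicator B1 x1)) = f2" by auto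
  then show "0 \<ge> (1::nat) \<or> (\<exists>x1. (\<lambda>x2. (case (x1, x2) of (x1, x2) \<Rightarrow> f2 x2 * indicator B1 x1)) \<in> D2)"
    using f2 by metis
qed auto

lemma P_A21:
  assumes "{} \<notin> \<B>2" and f1: "f1 \<in> D1" and B2: "B2 \<in> \<B>2 \<union> {UNIV}"
  shows "Pinv D1 D2 (\<lambda>(x1, x2). f1 x1 * indicator B2 x2)"
proof (rule PinvI[where h="\<lambda>_. 0" and n=1 and b="\<lambda>_. f1" and F="\<lambda>_. B2"])
qed (use assms in \<open>auto simp: C0_def\<close>)

lemma P_pos:
  assumes c2: "coherent D2" and p: "p \<in> pos_gambles"
  shows "Pinv D1 D2 p"
proof (rule PinvI[where h=p and n=0 and b="\<lambda>_ _. 0" and F="\<lambda>_. {}"])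
  have pg: "p \<in> gambles" "\<forall>z. p z \<ge> 0" "p \<noteq> (\<lambda>_. 0)" using p unfolding pos_gambles_def by auto
  have sec: "(\<lambda>x2. p (x1, x2)) \<in> D2" if "(\<lambda>x2. p (x1, x2)) \<noteq> (\<lambda>_. 0)" for x1
    using coh_pos[OF c2 gambles_section[OF pg(1)]] pg(2) that by auto
  show "(\<lambda>x2. p (x1, x2)) \<in> C0 D2" for x1
    using sec[of x1] unfolding C0_def by auto
  have "\<exists>z. p z \<noteq> 0"
  proof (rule ccontr)
    assume "\<not> ?thesis" then have "p = (\<lambda>_. 0)" by auto
    then show False using pg(3) by simp
  qed
  then obtain x1 x2 where "p (x1, x2) \<noteq> 0" by auto
  then have "(\<lambda>x2. p (x1, x2)) \<noteq> (\<lambda>_. 0)" by (metis)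
  then show "0 \<ge> (1::nat) \<or> (\<exists>x1. (\<lambda>x2. p (x1, x2)) \<in> D2)" using sec by blast
qed auto

lemma P_natext:
  assumes c1: "coherent D1" and c2: "coherent D2" and "{} \<notin> \<B>1" "{} \<notin> \<B>2"
    and g: "g \<in> natext (A12 \<B>1 D2 \<union> A21 \<B>2 D1)"
  shows "Pinv D1 D2 g"
  using g unfolding natext_def
proof (rule posi_induct)
  fix f assume "f \<in> A12 \<B>1 D2 \<union> A21 \<B>2 D1 \<union> pos_gambles"
  then consider (a) "f \<in> A12 \<B>1 D2" | (b) "f \<in> A21 \<B>2 D1" | (c) "f \<in> pos_gambles" by blast
  then show "Pinv D1 D2 f"
  proof cases
    case a
    then obtain f2 B1 where "f = (\<lambda>(x1, x2). f2 x2 * indicator B1 x1)" "f2 \<in> D2" "B1 \<in> \<B>1 \<union> {UNIV}"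
      unfolding A12_def by blast
    then show ?thesis using P_A12[OF c2 assms(3)] by blast
  next
    case b
    then obtain f1 B2 where "f = (\<lambda>(x1, x2). f1 x1 * indicator B2 x2)" "f1 \<in> D1" "B2 \<in> \<B>2 \<union> {UNIV}"
      unfolding A21_def by blast
    then show ?thesis using P_A21[OF assms(4)] by blast
  next
    case c then show ?thesis using P_pos[OF c2] by blast
  qed
qed (use P_scale[OF c1 c2] P_add[OF c1 c2] in auto)


lemma P_contra:
  assumes c1: "coherent D1" and c2: "coherent D2" and P: "Pinv D1 D2 g" and le: "\<forall>z. g z \<le> 0"
  shows False
proof -
  obtain n :: nat and b F h where h:
    "\<forall>x1 x2. g (x1, x2) = h (x1, x2) + (\<Sum>k<n. b k x1 * indicator (F k) x2)"
    "\<forall>k<n. b k \<in> D1 \<and> F k \<noteq> {}" "\<forall>x1. (\<lambda>x2. h (x1, x2)) \<in> C0 D2"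
    "n \<ge> 1 \<or> (\<exists>x1. (\<lambda>x2. h (x1, x2)) \<in> D2)"
    using P unfolding Pinv_def by blast
  show False
  proof (cases "n \<ge> 1")
    case False
    then have n0: "n = 0" by simp
    then obtain x1 where x1: "(\<lambda>x2. h (x1, x2)) \<in> D2" using h(4) by auto
    have "\<forall>x2. h (x1, x2) \<le> 0" using h(1) le n0 by (metis add.right_neutral lessThan_0 sum.empty)
    then show False using coh_le0[OF c2 x1] by simp
  next
    case True
    note n = True
    define G where "G = {c. (\<lambda>x2. \<Sum>k<n. c k * indicator (F k) x2) \<in> C0 D2}"
    have Gadd: "(\<lambda>k. c k + d k) \<in> G" if "c \<in> G" "d \<in> G" for c d
    proof -
      have "(\<lambda>x2. \<Sum>k<n. (c k + d k) * indicator (F k) x2) =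
          (\<lambda>x2. (\<Sum>k<n. c k * indicator (F k) x2) + (\<Sum>k<n. d k * indicator (F k) x2))"
        by (simp add: distrib_right sum.distrib)
      then show ?thesis using C0_add[OF c2] that unfolding G_def by simp
    qed
    have Gscl: "(\<lambda>k. t * c k) \<in> G" if "c \<in> G" "t > 0" for c t
    proof -
      have "(\<lambda>x2. \<Sum>k<n. (t * c k) * indicator (F k) x2) =
          (\<lambda>x2. t * (\<Sum>k<n. c k * indicator (F k) x2))"
        by (simp add: sum_distrib_left mult.assoc)
      then show ?thesis using C0_scale[OF c2 _ that(2)] that(1) unfolding G_def by simp
    qed
    have Gnn: "\<exists>k<n. c k \<ge> 0" if "c \<in> G" for c
    proof (rule ccontr)
      assume "\<not> ?thesis"
      then have neg: "\<forall>k<n. c k < 0" by auto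
      define \<phi> where "\<phi> = (\<lambda>x2. \<Sum>k<n. c k * indicator (F k) x2)"
      have phi: "\<phi> \<in> C0 D2" using that unfolding G_def \<phi>_def by simp
      have nonp: "\<forall>x. \<phi> x \<le> 0" unfolding \<phi>_def
        using neg by (auto intro!: sum_nonpos mult_nonpos_nonneg simp: indicator_def)
      have "0 < n" using n by simp
      then obtain x where x: "x \<in> F 0" using h(2) by blast
      have "\<phi> x = c 0 * indicator (F 0) x + (\<Sum>k\<in>{..<n} - {0}. c k * indicator (F k) x)"
        unfolding \<phi>_def using \<open>0 < n\<close> by (subst sum.remove[of _ 0]) auto
      also have "(\<Sum>k\<in>{..<n} - {0}. c k * indicator (F k) x) \<le> 0"
        using neg by (auto intro!: sum_nonpos mult_nonpos_nonneg simp: indicator_def)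
      finally have "\<phi> x \<le> c 0" using x by simp
      moreover have "c 0 < 0" using neg \<open>0 < n\<close> by simp
      ultimately have "\<phi> x < 0" by linarith
      then have "\<phi> \<noteq> (\<lambda>_. 0)" by auto
      then have "\<phi> \<in> D2" using phi unfolding C0_def by simp
      then show False using coh_le0[OF c2 _ nonp] by simp
    qed
    obtain \<mu> where mu: "\<forall>k<n. \<mu> k \<ge> 0" "\<exists>k<n. \<mu> k > 0" "\<forall>c\<in>G. (\<Sum>k<n. \<mu> k * c k) \<ge> 0"
      using gordan[OF n Gadd Gscl Gnn] by blast
    have row: "(\<lambda>k. - b k x1) \<in> G" for x1
    proof -
      have eq: "(\<lambda>x2. \<Sum>k<n. (- b k x1) * indicator (F k) x2) = (\<lambda>x2. h (x1, x2) + (- g (x1, x2)))"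
        using h(1) by (auto simp: sum_negf)
      have "(\<lambda>x2. \<Sum>k<n. (- b k x1) * indicator (F k) x2) \<in> gambles" by (rule gambles_ind_sum)
      then have "(\<lambda>x2. (h (x1, x2) + (- g (x1, x2))) - h (x1, x2)) \<in> gambles"
        unfolding eq using gambles_diff C0_gamble[OF c2 h(3)[rule_format, of x1]] by blast
      then have pg: "(\<lambda>x2. - g (x1, x2)) \<in> gambles" by simp
      have "(\<lambda>x2. h (x1, x2) + (- g (x1, x2))) \<in> C0 D2"
        using C0_up[OF c2 h(3)[rule_format, of x1] pg] le by auto
      then show ?thesis unfolding G_def using eq by simp
    qed
    have "(\<Sum>k<n. \<mu> k * b k x1) \<le> 0" for x1
    proof -
      have "0 \<le> (\<Sum>k<n. \<mu> k * (- b k x1))" using bspec[OF mu(3) row[of x1]] by simp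
      then show ?thesis by (simp add: sum_negf)
    qed
    moreover have "(\<lambda>x. \<Sum>k<n. \<mu> k * b k x) \<in> D1"
      using poscomb[OF c1, of n \<mu> b] mu h(2) by auto
    ultimately show False using coh_le0[OF c1] by blast
  qed
qed


lemma A12I: "f2 \<in> D2 \<Longrightarrow> B1 \<in> \<B>1 \<union> {UNIV} \<Longrightarrow> (\<lambda>(x1, x2). f2 x2 * indicator B1 x1) \<in> A12 \<B>1 D2"
  unfolding A12_def by blast

lemma A21I: "f1 \<in> D1 \<Longrightarrow> B2 \<in> \<B>2 \<union> {UNIV} \<Longrightarrow> (\<lambda>(x1, x2). f1 x1 * indicator B2 x2) \<in> A21 \<B>2 D1"
  unfolding A21_def by blast

lemma natext_base: "f \<in> A \<Longrightarrow> f \<in> natext A"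
  unfolding natext_def by (rule posi_base) simp

lemma natext_add: "f \<in> natext A \<Longrightarrow> g \<in> natext A \<Longrightarrow> (\<lambda>x. f x + g x) \<in> natext A"
  unfolding natext_def by (rule posi_add)

lemma natext_mono: "A \<subseteq> B \<Longrightarrow> natext A \<subseteq> natext B"
  unfolding natext_def by (rule posi_mono) blast

lemma A12_gambles: assumes "coherent D2" shows "A12 \<B>1 D2 \<subseteq> gambles"
proof
  fix g assume "g \<in> A12 \<B>1 D2"
  then obtain f2 B1 where g: "g = (\<lambda>(x1, x2). f2 x2 * indicator B1 x1)" "f2 \<in> D2"
    unfolding A12_def by blast
  obtain M where M: "\<forall>x. \<bar>f2 x\<bar> \<le> M" using coh_gamble[OF assms g(2)] unfolding gambles_def by blast
  have "M \<ge> 0" using M by (meson abs_ge_zero order_trans)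
  then show "g \<in> gambles" unfolding g(1) using M
    by (intro gamblesI[of _ M]) (auto simp: indicator_def split: prod.split)
qed

lemma A21_gambles: assumes "coherent D1" shows "A21 \<B>2 D1 \<subseteq> gambles"
proof
  fix g assume "g \<in> A21 \<B>2 D1"
  then obtain f1 B2 where g: "g = (\<lambda>(x1, x2). f1 x1 * indicator B2 x2)" "f1 \<in> D1"
    unfolding A21_def by blast
  obtain M where M: "\<forall>x. \<bar>f1 x\<bar> \<le> M" using coh_gamble[OF assms g(2)] unfolding gambles_def by blast
  have "M \<ge> 0" using M by (meson abs_ge_zero order_trans)
  then show "g \<in> gambles" unfolding g(1) using M
    by (intro gamblesI[of _ M]) (auto simp: indicator_def split: prod.split)
qed

lemma natext_coherent:
  assumes c1: "coherent D1" and c2: "coherent D2" and "{} \<notin> \<B>1" "{} \<notin> \<B>2"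
  shows "coherent (indep_nat_ext \<B>1 \<B>2 D1 D2)"
  unfolding indep_nat_ext_def
proof (rule coherent_natextI)
  show "A12 \<B>1 D2 \<union> A21 \<B>2 D1 \<subseteq> gambles" using A12_gambles[OF c2] A21_gambles[OF c1] by blast
  fix g assume "g \<in> natext (A12 \<B>1 D2 \<union> A21 \<B>2 D1)" "\<forall>x. g x \<le> 0"
  then show False using P_natext[OF c1 c2 assms(3,4)] P_contra[OF c1 c2] by blast
qed

lemma ext_coherent:
  assumes c: "coherent D" and fg: "f \<in> gambles" and fD: "f \<notin> D" and f0: "f \<noteq> (\<lambda>_. 0)"
  shows "coherent (natext (insert (\<lambda>x. - f x) D))"
proof (rule coherent_natextI)
  have "(\<lambda>x. - f x) \<in> gambles" using gambles_scale[OF fg, of "-1"] by simp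
  then show "insert (\<lambda>x. - f x) D \<subseteq> gambles" using coh_gamble[OF c] by blast
  fix g assume g: "g \<in> natext (insert (\<lambda>x. - f x) D)" and gle: "\<forall>x. g x \<le> 0"
  define NF where "NF g \<longleftrightarrow> (\<exists>l e. l \<ge> 0 \<and> e \<in> C0 D \<and> (l > 0 \<or> e \<in> D) \<and> g = (\<lambda>x. l * (- f x) + e x))" for g
  have "NF g" using g unfolding natext_def
  proof (rule posi_induct)
    fix h assume "h \<in> insert (\<lambda>x. - f x) D \<union> pos_gambles"
    then consider (ia) "h = (\<lambda>x. - f x)" | (ib) "h \<in> D" | (ic) "h \<in> pos_gambles" by blast
    then show "NF h"
    proof cases
      case ia then show ?thesis unfolding NF_def
        by (intro exI[of _ 1] exI[of _ "\<lambda>_. 0"]) (auto simp: C0_def)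
    next
      case ib then show ?thesis unfolding NF_def
        by (intro exI[of _ 0] exI[of _ h]) (auto simp: C0_def)
    next
      case ic
      then have "h \<in> D" using coh_pos[OF c] unfolding pos_gambles_def by blast
      then show ?thesis unfolding NF_def
        by (intro exI[of _ 0] exI[of _ h]) (auto simp: C0_def)
    qed
  next
    fix h t assume "NF h" "(t::real) > 0"
    then obtain l e where le: "l \<ge> 0" "e \<in> C0 D" "l > 0 \<or> e \<in> D" "h = (\<lambda>x. l * (- f x) + e x)"
      unfolding NF_def by blast
    have "(\<lambda>x. t * e x) \<in> C0 D" using C0_scale[OF c le(2) \<open>t > 0\<close>] .
    moreover have "t * l > 0 \<or> (\<lambda>x. t * e x) \<in> D" using le(3) coh_scale[OF c _ \<open>t > 0\<close>] \<open>t > 0\<close> by auto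
    moreover have "(\<lambda>x. t * h x) = (\<lambda>x. (t * l) * (- f x) + t * e x)" using le(4) by (auto simp: algebra_simps)
    ultimately show "NF (\<lambda>x. t * h x)" unfolding NF_def using le(1) \<open>t > 0\<close>
      by (intro exI[of _ "t * l"] exI[of _ "\<lambda>x. t * e x"]) auto
  next
    fix h h' assume "NF h" "NF h'"
    then obtain l e l' e' where le: "l \<ge> 0" "e \<in> C0 D" "l > 0 \<or> e \<in> D" "h = (\<lambda>x. l * (- f x) + e x)"
      and le': "l' \<ge> 0" "e' \<in> C0 D" "l' > 0 \<or> e' \<in> D" "h' = (\<lambda>x. l' * (- f x) + e' x)"
      unfolding NF_def by blast
    have "(\<lambda>x. e x + e' x) \<in> C0 D" using C0_add[OF c le(2) le'(2)] .
    moreover have "l + l' > 0 \<or> (\<lambda>x. e x + e' x) \<in> D" using le(1,3) le'(1,3) coh_add[OF c] by force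
    moreover have "(\<lambda>x. h x + h' x) = (\<lambda>x. (l + l') * (- f x) + (e x + e' x))"
      using le(4) le'(4) by (auto simp: algebra_simps)
    ultimately show "NF (\<lambda>x. h x + h' x)" unfolding NF_def using le(1) le'(1)
      by (intro exI[of _ "l + l'"] exI[of _ "\<lambda>x. e x + e' x"]) auto
  qed
  then obtain l e where le: "l \<ge> 0" "e \<in> C0 D" "l > 0 \<or> e \<in> D" "g = (\<lambda>x. l * (- f x) + e x)"
    unfolding NF_def by blast
  show False
  proof (cases "l > 0")
    case False
    then have "l = 0" "e \<in> D" using le by auto
    then show False using le(4) gle coh_le0[OF c, of e] by auto
  next
    case True
    have ef: "e x \<le> l * f x" for x using le(4) gle[rule_format, of x] by (simp add: fun_eq_iff)
    show False
    proof (cases "e \<in> D")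
      case True
      have eg: "e \<in> gambles" using coh_gamble[OF c True] .
      have pg: "(\<lambda>x. l * f x - e x) \<in> gambles" using gambles_diff[OF gambles_scale[OF fg] eg] .
      have "(\<lambda>x. e x + (l * f x - e x)) \<in> D" using coh_up[OF c True pg] ef by auto
      then have "(\<lambda>x. l * f x) \<in> D" by simp
      from coh_scale[OF c this, of "1 / l"] have "(\<lambda>x. (1/l) * (l * f x)) \<in> D" using \<open>l > 0\<close> by simp
      then show False using fD \<open>l > 0\<close> by simp
    next
      case False
      then have "e = (\<lambda>_. 0)" using le(2) unfolding C0_def by simp
      then have "\<forall>x. f x \<ge> 0" using ef \<open>l > 0\<close> by (simp add: zero_le_mult_iff)
      then show False using coh_pos[OF c fg _ f0] fD by blast
    qed
  qed
qed


lemma marg1_lemma: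
  assumes c1: "coherent D1" and c2: "coherent D2" and e1: "{} \<notin> \<B>1" and e2: "{} \<notin> \<B>2"
    and fg: "f \<in> gambles" and B: "B \<in> \<B>2 \<union> {UNIV}"
    and fin: "(\<lambda>(x1, x2). f x1 * indicator B x2) \<in> indep_nat_ext \<B>1 \<B>2 D1 D2"
  shows "f \<in> D1"
proof (rule ccontr)
  assume fD: "f \<notin> D1"
  show False
  proof (cases "f = (\<lambda>_. 0)")
    case True
    then have "\<forall>z. (\<lambda>(x1, x2). f x1 * indicator B x2) z \<le> 0" by auto
    then show False using coh_le0[OF natext_coherent[OF c1 c2 e1 e2] fin] by blast
  next
    case False
    define D1' where "D1' = natext (insert (\<lambda>x. - f x) D1)"
    have c1': "coherent D1'" unfolding D1'_def using ext_coherent[OF c1 fg fD False] .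
    have sub: "D1 \<subseteq> D1'" unfolding D1'_def using natext_base by blast
    have mf: "(\<lambda>x. - f x) \<in> D1'" unfolding D1'_def by (rule natext_base) simp
    have "A21 \<B>2 D1 \<subseteq> A21 \<B>2 D1'" using sub unfolding A21_def by blast
    then have subN: "indep_nat_ext \<B>1 \<B>2 D1 D2 \<subseteq> indep_nat_ext \<B>1 \<B>2 D1' D2"
      unfolding indep_nat_ext_def by (intro natext_mono) blast
    have g1: "(\<lambda>(x1, x2). f x1 * indicator B x2) \<in> indep_nat_ext \<B>1 \<B>2 D1' D2" using fin subN by blast
    have "(\<lambda>(x1, x2). - f x1 * indicator B x2) \<in> A21 \<B>2 D1'"
      using A21I[OF mf B] by simp
    then have g2: "(\<lambda>(x1, x2). - f x1 * indicator B x2) \<in> indep_nat_ext \<B>1 \<B>2 D1' D2"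
      unfolding indep_nat_ext_def by (intro natext_base) blast
    have "(\<lambda>z. (\<lambda>(x1, x2). f x1 * indicator B x2) z + (\<lambda>(x1, x2). - f x1 * indicator B x2) z)
        \<in> indep_nat_ext \<B>1 \<B>2 D1' D2"
      using g1 g2 unfolding indep_nat_ext_def by (rule natext_add)
    moreover have "\<forall>z. (\<lambda>z. (\<lambda>(x1, x2). f x1 * indicator B x2) z + (\<lambda>(x1, x2). - f x1 * indicator B x2) z) z \<le> 0"
      by auto
    ultimately show False using coh_le0[OF natext_coherent[OF c1' c2 e1 e2]] by blast
  qed
qed

lemma marg2_lemma:
  assumes c1: "coherent D1" and c2: "coherent D2" and e1: "{} \<notin> \<B>1" and e2: "{} \<notin> \<B>2"
    and fg: "f \<in> gambles" and B: "B \<in> \<B>1 \<union> {UNIV}"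
    and fin: "(\<lambda>(x1, x2). f x2 * indicator B x1) \<in> indep_nat_ext \<B>1 \<B>2 D1 D2"
  shows "f \<in> D2"
proof (rule ccontr)
  assume fD: "f \<notin> D2"
  show False
  proof (cases "f = (\<lambda>_. 0)")
    case True
    then have "\<forall>z. (\<lambda>(x1, x2). f x2 * indicator B x1) z \<le> 0" by auto
    then show False using coh_le0[OF natext_coherent[OF c1 c2 e1 e2] fin] by blast
  next
    case False
    define D2' where "D2' = natext (insert (\<lambda>x. - f x) D2)"
    have c2': "coherent D2'" unfolding D2'_def using ext_coherent[OF c2 fg fD False] .
    have sub: "D2 \<subseteq> D2'" unfolding D2'_def using natext_base by blast
    have mf: "(\<lambda>x. - f x) \<in> D2'" unfolding D2'_def by (rule natext_base) simp
    have "A12 \<B>1 D2 \<subseteq> A12 \<B>1 D2'" using sub unfolding A12_def by blast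
    then have subN: "indep_nat_ext \<B>1 \<B>2 D1 D2 \<subseteq> indep_nat_ext \<B>1 \<B>2 D1 D2'"
      unfolding indep_nat_ext_def by (intro natext_mono) blast
    have g1: "(\<lambda>(x1, x2). f x2 * indicator B x1) \<in> indep_nat_ext \<B>1 \<B>2 D1 D2'" using fin subN by blast
    have "(\<lambda>(x1, x2). - f x2 * indicator B x1) \<in> A12 \<B>1 D2'"
      using A12I[OF mf B] by simp
    then have g2: "(\<lambda>(x1, x2). - f x2 * indicator B x1) \<in> indep_nat_ext \<B>1 \<B>2 D1 D2'"
      unfolding indep_nat_ext_def by (intro natext_base) blast
    have "(\<lambda>z. (\<lambda>(x1, x2). f x2 * indicator B x1) z + (\<lambda>(x1, x2). - f x2 * indicator B x1) z)
        \<in> indep_nat_ext \<B>1 \<B>2 D1 D2'"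
      using g1 g2 unfolding indep_nat_ext_def by (rule natext_add)
    moreover have "\<forall>z. (\<lambda>z. (\<lambda>(x1, x2). f x2 * indicator B x1) z + (\<lambda>(x1, x2). - f x2 * indicator B x1) z) z \<le> 0"
      by auto
    ultimately show False using coh_le0[OF natext_coherent[OF c1 c2' e1 e2]] by blast
  qed
qed

theorem theorem16:
  fixes \<B>1 :: "'a set set" and \<B>2 :: "'b set set"
    and D1 :: "('a \<Rightarrow> real) set" and D2 :: "('b \<Rightarrow> real) set"
  assumes "{} \<notin> \<B>1" and "{} \<notin> \<B>2"
    and "coherent D1" and "coherent D2"
  shows "indep_product \<B>1 \<B>2 D1 D2 (indep_nat_ext \<B>1 \<B>2 D1 D2) \<and>
         (\<forall>D. indep_product \<B>1 \<B>2 D1 D2 D \<longrightarrow> indep_nat_ext \<B>1 \<B>2 D1 D2 \<subseteq> D)"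
proof
  note c1 = assms(3) and c2 = assms(4) and e1 = assms(1) and e2 = assms(2)
  let ?N = "indep_nat_ext \<B>1 \<B>2 D1 D2"
  have cyl1: "cyl1 f = (\<lambda>(x1, x2). f x1 * indicator UNIV x2)" for f :: "'a \<Rightarrow> real"
    unfolding cyl1_def by auto
  have cyl2: "cyl2 f = (\<lambda>(x1, x2). f x2 * indicator UNIV x1)" for f :: "'b \<Rightarrow> real"
    unfolding cyl2_def by auto
  have inN1: "(\<lambda>(x1, x2). f x1 * indicator B x2) \<in> ?N" if "f \<in> D1" "B \<in> \<B>2 \<union> {UNIV}" for f B
    unfolding indep_nat_ext_def using A21I[OF that] by (intro natext_base) blast
  have inN2: "(\<lambda>(x1, x2). f x2 * indicator B x1) \<in> ?N" if "f \<in> D2" "B \<in> \<B>1 \<union> {UNIV}" for f B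
    unfolding indep_nat_ext_def using A12I[OF that] by (intro natext_base) blast
  have m1c: "{f \<in> gambles. (\<lambda>(x1, x2). f x1 * indicator B x2) \<in> ?N} = D1" if "B \<in> \<B>2 \<union> {UNIV}" for B
    using marg1_lemma[OF c1 c2 e1 e2 _ that] inN1[OF _ that] coh_gamble[OF c1] by blast
  have m2c: "{f \<in> gambles. (\<lambda>(x1, x2). f x2 * indicator B x1) \<in> ?N} = D2" if "B \<in> \<B>1 \<union> {UNIV}" for B
    using marg2_lemma[OF c1 c2 e1 e2 _ that] inN2[OF _ that] coh_gamble[OF c2] by blast
  have M1: "marg1 ?N = D1" unfolding marg1_def cyl1 using m1c[of UNIV] by simp
  have M2: "marg2 ?N = D2" unfolding marg2_def cyl2 using m2c[of UNIV] by simp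
  have "\<forall>B2\<in>\<B>2. marg1_cond ?N B2 = marg1 ?N" unfolding marg1_cond_def M1 using m1c by blast
  moreover have "\<forall>B1\<in>\<B>1. marg2_cond ?N B1 = marg2 ?N" unfolding marg2_cond_def M2 using m2c by blast
  ultimately show "indep_product \<B>1 \<B>2 D1 D2 ?N"
    unfolding indep_product_def epist_indep_def using M1 M2 natext_coherent[OF c1 c2 e1 e2] by blast
  show "\<forall>D. indep_product \<B>1 \<B>2 D1 D2 D \<longrightarrow> ?N \<subseteq> D"
  proof (intro allI impI)
    fix D assume ip: "indep_product \<B>1 \<B>2 D1 D2 D"
    then have cD: "coherent D" and m1: "marg1 D = D1" and m2: "marg2 D = D2"
      and mc1: "\<forall>B2\<in>\<B>2. marg1_cond D B2 = marg1 D" and mc2: "\<forall>B1\<in>\<B>1. marg2_cond D B1 = marg2 D"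
      unfolding indep_product_def epist_indep_def by auto
    have "A12 \<B>1 D2 \<subseteq> D"
    proof
      fix g assume "g \<in> A12 \<B>1 D2"
      then obtain f2 B1 where g: "g = (\<lambda>(x1, x2). f2 x2 * indicator B1 x1)" "f2 \<in> D2" "B1 \<in> \<B>1 \<union> {UNIV}"
        unfolding A12_def by blast
      show "g \<in> D"
      proof (cases "B1 \<in> \<B>1")
        case True
        then have "f2 \<in> marg2_cond D B1" using mc2 m2 g(2) by blast
        then show ?thesis unfolding marg2_cond_def g(1) by blast
      next
        case False
        then have "B1 = UNIV" using g(3) by blast
        moreover have "cyl2 f2 \<in> D" using m2 g(2) unfolding marg2_def by blast
        ultimately show ?thesis unfolding g(1) cyl2 by simp
      qed
    qed
    moreover have "A21 \<B>2 D1 \<subseteq> D"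
    proof
      fix g assume "g \<in> A21 \<B>2 D1"
      then obtain f1 B2 where g: "g = (\<lambda>(x1, x2). f1 x1 * indicator B2 x2)" "f1 \<in> D1" "B2 \<in> \<B>2 \<union> {UNIV}"
        unfolding A21_def by blast
      show "g \<in> D"
      proof (cases "B2 \<in> \<B>2")
        case True
        then have "f1 \<in> marg1_cond D B2" using mc1 m1 g(2) by blast
        then show ?thesis unfolding marg1_cond_def g(1) by blast
      next
        case False
        then have "B2 = UNIV" using g(3) by blast
        moreover have "cyl1 f1 \<in> D" using m1 g(2) unfolding marg1_def by blast
        ultimately show ?thesis unfolding g(1) cyl1 by simp
      qed
    qed
    ultimately show "?N \<subseteq> D" unfolding indep_nat_ext_def using coherent_natext_sub[OF cD] by blast
  qed
qed

end
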